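(* Let $\mathbf{k}=\mathbb{R}$ or $\mathbf{k}=\mathbb{C}$ and $n\geq2$. There exists a map $\rho\colon[-1,1]\to\mathrm{Bir}(\mathbb{P}^n_{\mathbf{k}})$, continuous for the Euclidean topologies, such that for arbitrarily small $\varepsilon>0$ and any $d\geq1$ there is no continuous map $\rho_\varepsilon\colon(-\varepsilon,\varepsilon)\to H_d(\mathbf{k})$ with $\rho|_{(-\varepsilon,\varepsilon)}=\pi_d\circ\rho_\varepsilon$.
   Context: For $d\geq1$, $W_d(\mathbf{k})$ is the projective space of classes $[h_0:\dots:h_n]$ of non-zero $(n+1)$-tuples of homogeneous polynomials of degree $d$ in $\mathbf{k}[x_0,\dots,x_n]$ modulo scalars, with its Euclidean topology; $H_d(\mathbf{k})\subset W_d(\mathbf{k})$ (subspace topology) is the set of $h$ such that $\psi_h\colon[x]\dashrightarrow[h_0(x):\dots:h_n(x)]$ is birational; $\pi_d\colon H_d(\mathbf{k})\to\mathrm{Bir}(\mathbb{P}^n_{\mathbf{k}})$, $h\mapsto\psi_h$, with image $\mathrm{Bir}(\mathbb{P}^n_{\mathbf{k}})_{\leq d}$ (maps of degree $\leq d$). The Euclidean topology on $\mathrm{Bir}(\mathbb{P}^n_{\mathbf{k}})_{\leq d}$ is the quotient topology via $\pi_d$, and on $\mathrm{Bir}(\mathbb{P}^n_{\mathbf{k}})$ the inductive limit topology of the $\mathrm{Bir}(\mathbb{P}^n_{\mathbf{k}})_{\leq d}$. *)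

theory Defs
  imports "HOL-Analysis.Analysis"
begin

text \<open>Homogeneous polynomials in x_0..x_n of degree d are encoded by their coefficients.
An (n+1)-tuple (h_0,...,h_n) is a coefficient function c, where c (i, a) is the coefficient
of the monomial prod_j x_j^(a j) in h_i.  Such c with finite support form a finite-dimensional
k-vector space; its Euclidean topology is the (product) topology on functions.\<close>

type_synonym 'k coeffs = "nat \<times> (nat \<Rightarrow> nat) \<Rightarrow> 'k"

definition Mon :: "nat \<Rightarrow> nat \<Rightarrow> (nat \<Rightarrow> nat) set" where
  "Mon n d = {a. (\<forall>j>n. a j = 0) \<and> (\<Sum>j\<le>n. a j) = d}"

definition Vd :: "nat \<Rightarrow> nat \<Rightarrow> ('k::real_normed_field) coeffs set" where
  "Vd n d = {c. c \<noteq> (\<lambda>_. 0) \<and> (\<forall>i a. c (i, a) \<noteq> 0 \<longrightarrow> i \<le> n \<and> a \<in> Mon n d)}"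

definition polyfun :: "nat \<Rightarrow> nat \<Rightarrow> ('k::real_normed_field) coeffs \<Rightarrow> nat \<Rightarrow> (nat \<Rightarrow> 'k) \<Rightarrow> 'k" where
  "polyfun n d c i x = (\<Sum>a\<in>Mon n d. c (i, a) * (\<Prod>j\<le>n. x j ^ a j))"

definition hmap :: "nat \<Rightarrow> nat \<Rightarrow> ('k::real_normed_field) coeffs \<Rightarrow> (nat \<Rightarrow> 'k) \<Rightarrow> (nat \<Rightarrow> 'k)" where
  "hmap n d c x = (\<lambda>i. if i \<le> n then polyfun n d c i x else 0)"

text \<open>psi_g o psi_h is defined and equals the identity as a rational map:
g(h(x)) is not identically zero and is proportional to x.\<close>
definition comp_is_id :: "nat \<Rightarrow> nat \<Rightarrow> ('k::real_normed_field) coeffs \<Rightarrow> nat \<Rightarrow> 'k coeffs \<Rightarrow> bool" where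
  "comp_is_id n e g d h \<longleftrightarrow>
     (\<exists>x. \<exists>i\<le>n. polyfun n e g i (hmap n d h x) \<noteq> 0) \<and>
     (\<forall>x. \<forall>i\<le>n. \<forall>j\<le>n. polyfun n e g i (hmap n d h x) * x j = polyfun n e g j (hmap n d h x) * x i)"

definition birational :: "nat \<Rightarrow> nat \<Rightarrow> ('k::real_normed_field) coeffs \<Rightarrow> bool" where
  "birational n d h \<longleftrightarrow> h \<in> Vd n d \<and>
     (\<exists>e\<ge>1. \<exists>g\<in>Vd n e. comp_is_id n e g d h \<and> comp_is_id n d h e g)"

definition same_map :: "nat \<Rightarrow> nat \<Rightarrow> ('k::real_normed_field) coeffs \<Rightarrow> nat \<Rightarrow> 'k coeffs \<Rightarrow> bool" where
  "same_map n d h e g \<longleftrightarrow>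
     (\<forall>x. \<forall>i\<le>n. \<forall>j\<le>n. polyfun n d h i x * polyfun n e g j x = polyfun n d h j x * polyfun n e g i x)"

text \<open>An element of Bir(P^n): the set of all birational representatives (of any degree) of the map.\<close>
type_synonym 'k bir = "(nat \<times> 'k coeffs) set"

definition psi :: "nat \<Rightarrow> nat \<Rightarrow> ('k::real_normed_field) coeffs \<Rightarrow> 'k bir" where
  "psi n d h = {(e, g). e \<ge> 1 \<and> birational n e g \<and> same_map n d h e g}"

definition quotient_top :: "'a topology \<Rightarrow> ('a \<Rightarrow> 'b) \<Rightarrow> 'b topology" where
  "quotient_top X f = topology (\<lambda>U. U \<subseteq> f ` topspace X \<and> openin X {x \<in> topspace X. f x \<in> U})"

definition proj_class :: "('k::real_normed_field) coeffs \<Rightarrow> 'k coeffs set" where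
  "proj_class c = {(\<lambda>p. s * c p) | s. s \<noteq> 0}"

definition W :: "nat \<Rightarrow> nat \<Rightarrow> ('k::real_normed_field) coeffs set set" where
  "W n d = proj_class ` Vd n d"

definition Wtop :: "nat \<Rightarrow> nat \<Rightarrow> ('k::real_normed_field) coeffs set topology" where
  "Wtop n d = quotient_top (subtopology euclidean (Vd n d)) proj_class"

definition H :: "nat \<Rightarrow> nat \<Rightarrow> ('k::real_normed_field) coeffs set set" where
  "H n d = {w \<in> W n d. \<exists>h\<in>w. birational n d h}"

definition Htop :: "nat \<Rightarrow> nat \<Rightarrow> ('k::real_normed_field) coeffs set topology" where
  "Htop n d = subtopology (Wtop n d) (H n d)"

definition pi :: "nat \<Rightarrow> nat \<Rightarrow> ('k::real_normed_field) coeffs set \<Rightarrow> 'k bir" where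
  "pi n d w = psi n d (SOME h. h \<in> w)"

definition Bir_le :: "nat \<Rightarrow> nat \<Rightarrow> ('k::real_normed_field) bir set" where
  "Bir_le n d = pi n d ` H n d"

definition Bir_le_top :: "nat \<Rightarrow> nat \<Rightarrow> ('k::real_normed_field) bir topology" where
  "Bir_le_top n d = quotient_top (Htop n d) (pi n d)"

definition Bir :: "nat \<Rightarrow> ('k::real_normed_field) bir set" where
  "Bir n = (\<Union>d\<in>{1..}. Bir_le n d)"

definition BirTop :: "nat \<Rightarrow> ('k::real_normed_field) bir topology" where
  "BirTop n = topology (\<lambda>U. U \<subseteq> Bir n \<and> (\<forall>d\<ge>1. openin (Bir_le_top n d) (U \<inter> Bir_le n d)))"

end

theory Submission
  imports Defs "HOL-Complex_Analysis.Complex_Analysis"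
begin


lemma finite_Mon: "finite (Mon n d)"
proof -
  have "Mon n d \<subseteq> {a. \<forall>j. (j \<in> {0..n} \<longrightarrow> a j \<in> {0..d}) \<and> (j \<notin> {0..n} \<longrightarrow> a j = 0)}"
  proof
    fix a assume a: "a \<in> Mon n d"
    have "a j \<le> d" if "j \<le> n" for j
    proof -
      have "a j \<le> (\<Sum>j\<le>n. a j)" using that by (intro member_le_sum) auto
      thus ?thesis using a by (simp add: Mon_def)
    qed
    thus "a \<in> {a. \<forall>j. (j \<in> {0..n} \<longrightarrow> a j \<in> {0..d}) \<and> (j \<notin> {0..n} \<longrightarrow> a j = 0)}"
      using a by (auto simp: Mon_def)
  qed
  moreover have "finite {a. \<forall>j. (j \<in> {0..n} \<longrightarrow> a j \<in> {0..d}) \<and> (j \<notin> {0..n} \<longrightarrow> a j = 0)}"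
    using finite_set_of_finite_funs[of "{0..n}" "{0..d}" 0] by simp
  ultimately show ?thesis using finite_subset by blast
qed

definition mc :: "nat \<Rightarrow> (nat \<Rightarrow> nat) \<Rightarrow> ('k::real_normed_field) coeffs" where
  "mc i m = (\<lambda>p. if p = (i, m) then 1 else 0)"
definition mono :: "nat \<Rightarrow> (nat \<Rightarrow> nat) \<Rightarrow> (nat \<Rightarrow> 'k::real_normed_field) \<Rightarrow> 'k" where
  "mono n a x = (\<Prod>j\<le>n. x j ^ a j)"
definition ex :: "nat \<Rightarrow> nat \<Rightarrow> nat" where "ex j = (\<lambda>k. if k = j then 1 else 0)"
definition ex2 :: "nat \<Rightarrow> nat \<Rightarrow> nat \<Rightarrow> nat" where "ex2 j l = (\<lambda>k. ex j k + ex l k)"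

lemma polyfun_add: "polyfun n d (\<lambda>p. c1 p + c2 p) i x = polyfun n d c1 i x + polyfun n d c2 i x"
  by (simp add: polyfun_def sum.distrib distrib_right)
lemma polyfun_scale: "polyfun n d (\<lambda>p. k * c p) i x = k * polyfun n d c i x"
  by (simp add: polyfun_def sum_distrib_left mult.assoc)
lemma polyfun_sum: "polyfun n d (\<lambda>p. \<Sum>l\<in>L. f l p) i x = (\<Sum>l\<in>L. polyfun n d (f l) i x)"
  by (simp add: polyfun_def sum_distrib_right sum.swap[of _ "Mon n d"])
lemma polyfun_mc: "polyfun n d (mc j m) i x = (if i = j \<and> m \<in> Mon n d then mono n m x else 0)"
  by (cases "i = j") (simp_all add: polyfun_def mc_def mono_def finite_Mon if_distrib[of "\<lambda>u. u * _"] sum.delta' cong: if_cong)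

lemma prod_ex: "j \<le> n \<Longrightarrow> (\<Prod>k\<le>n. (x k::'k::comm_ring_1) ^ ex j k) = x j"
proof -
  assume "j \<le> n"
  have "(\<Prod>k\<le>n. x k ^ ex j k) = (\<Prod>k\<le>n. if k = j then x k else 1)"
    by (rule prod.cong) (auto simp: ex_def)
  also have "\<dots> = x j" using \<open>j \<le> n\<close> by (simp add: prod.delta')
  finally show ?thesis .
qed

lemma mono_ex2: "j \<le> n \<Longrightarrow> l \<le> n \<Longrightarrow> mono n (ex2 j l) x = x j * x l"
  by (simp add: mono_def ex2_def power_add prod.distrib prod_ex)

lemma sum_ex: "j \<le> n \<Longrightarrow> (\<Sum>k\<le>n. ex j k) = 1"
  by (simp add: ex_def)

lemma ex2_Mon: "j \<le> n \<Longrightarrow> l \<le> n \<Longrightarrow> ex2 j l \<in> Mon n 2"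
  by (auto simp: Mon_def ex2_def sum.distrib sum_ex) (auto simp: ex_def)

definition Acf :: "nat \<Rightarrow> ('k::real_normed_field) coeffs" where
  "Acf n = (\<lambda>p. \<Sum>i\<le>n. mc i (ex2 0 i) p)"
definition Bcf :: "nat \<Rightarrow> ('k::real_normed_field) coeffs" where
  "Bcf n = (\<lambda>p. \<Sum>i\<le>n. mc i (ex2 1 i) p)"
definition Qcf :: "('k::real_normed_field) coeffs" where
  "Qcf = (\<lambda>p. mc 2 (ex2 0 0) p + mc 2 (ex2 1 1) p)"
definition Gc :: "nat \<Rightarrow> real \<Rightarrow> real \<Rightarrow> real \<Rightarrow> ('k::real_normed_field) coeffs" where
  "Gc n a b s = (\<lambda>p. of_real a * Acf n p + of_real b * Bcf n p + of_real s * Qcf p)"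
definition LL :: "real \<Rightarrow> real \<Rightarrow> (nat \<Rightarrow> 'k::real_normed_field) \<Rightarrow> 'k" where
  "LL a b x = of_real a * x 0 + of_real b * x 1"
definition pt :: "real \<Rightarrow> real \<Rightarrow> nat \<Rightarrow> 'k::real_normed_field" where
  "pt a b = (\<lambda>j. if j = 0 then of_real a else if j = 1 then of_real b else 0)"

lemma polyfun_A: assumes "i \<le> n" shows "polyfun n 2 (Acf n) i x = x 0 * x i"
proof -
  have "polyfun n 2 (Acf n) i x = (\<Sum>l\<le>n. if l = i then mono n (ex2 0 l) x else 0)"
    unfolding Acf_def polyfun_sum polyfun_mc by (rule sum.cong) (auto simp: ex2_Mon)
  also have "\<dots> = x 0 * x i" using assms by (simp add: mono_ex2)
  finally show ?thesis .
qed

lemma polyfun_B: assumes "i \<le> n" "1 \<le> n" shows "polyfun n 2 (Bcf n) i x = x 1 * x i"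
proof -
  have "polyfun n 2 (Bcf n) i x = (\<Sum>l\<le>n. if l = i then mono n (ex2 1 l) x else 0)"
    unfolding Bcf_def polyfun_sum polyfun_mc using assms by (intro sum.cong) (auto simp: ex2_Mon)
  also have "\<dots> = x 1 * x i" using assms by (simp add: mono_ex2)
  finally show ?thesis .
qed

lemma polyfun_Q: assumes "2 \<le> n" shows "polyfun n 2 Qcf i x = (if i = 2 then x 0 * x 0 + x 1 * x 1 else 0)"
  using assms unfolding Qcf_def polyfun_add polyfun_mc by (simp add: ex2_Mon mono_ex2)

lemma polyfun_G: assumes "i \<le> n" "2 \<le> n"
  shows "polyfun n 2 (Gc n a b s) i x = LL a b x * x i + (if i = 2 then of_real s * (x 0 * x 0 + x 1 * x 1) else 0)"
  using assms unfolding Gc_def polyfun_add polyfun_scale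
  by (simp add: polyfun_A polyfun_B polyfun_Q LL_def algebra_simps)

definition suppok :: "nat \<Rightarrow> nat \<Rightarrow> ('k::real_normed_field) coeffs \<Rightarrow> bool" where
  "suppok n d c \<longleftrightarrow> (\<forall>i a. c (i, a) \<noteq> 0 \<longrightarrow> i \<le> n \<and> a \<in> Mon n d)"

lemma suppok_add: "suppok n d c1 \<Longrightarrow> suppok n d c2 \<Longrightarrow> suppok n d (\<lambda>p. c1 p + c2 p)"
  unfolding suppok_def by (metis add.right_neutral add_0)
lemma suppok_scale: "suppok n d c \<Longrightarrow> suppok n d (\<lambda>p. k * c p)"
  unfolding suppok_def by auto
lemma suppok_sum: "(\<And>l. l \<in> L \<Longrightarrow> suppok n d (f l)) \<Longrightarrow> suppok n d (\<lambda>p. \<Sum>l\<in>L. f l p)"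
  unfolding suppok_def by (metis (mono_tags, lifting) sum.neutral)
lemma suppok_mc: "i \<le> n \<Longrightarrow> m \<in> Mon n d \<Longrightarrow> suppok n d (mc i m)"
  unfolding suppok_def mc_def by auto

lemma suppok_G: assumes "2 \<le> n" shows "suppok n 2 (Gc n a b s)"
  unfolding Gc_def Acf_def Bcf_def Qcf_def using assms
  by (intro suppok_add suppok_scale suppok_sum suppok_mc ex2_Mon) auto

lemma Vd_iff: "c \<in> Vd n d \<longleftrightarrow> c \<noteq> (\<lambda>_. 0) \<and> suppok n d c"
  by (simp add: Vd_def suppok_def)

lemma polyfun_zero: "polyfun n d (\<lambda>_. 0) i x = 0"
  by (simp add: polyfun_def)

lemma LL_pt: "a\<^sup>2 + b\<^sup>2 = 1 \<Longrightarrow> LL a b (pt a b) = (1::'k::real_normed_field)"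
proof -
  assume h: "a\<^sup>2 + b\<^sup>2 = 1"
  have "LL a b (pt a b) = (of_real (a\<^sup>2 + b\<^sup>2) :: 'k)"
    by (simp add: LL_def pt_def power2_eq_square)
  thus ?thesis using h by simp
qed

lemma G_Vd: assumes "2 \<le> n" "a\<^sup>2 + b\<^sup>2 = 1" shows "(Gc n a b s :: 'k::real_normed_field coeffs) \<in> Vd n 2"
proof -
  have "a \<noteq> 0 \<or> b \<noteq> 0" using assms(2) by auto
  then obtain i where i: "i \<le> n" "polyfun n 2 (Gc n a b s) i (pt a b) \<noteq> (0::'k)"
  proof
    assume "a \<noteq> 0" thus ?thesis using that[of 0] assms by (simp add: polyfun_G LL_pt) (simp add: pt_def)
  next
    assume "b \<noteq> 0" thus ?thesis using that[of 1] assms by (simp add: polyfun_G LL_pt) (simp add: pt_def)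
  qed
  hence "Gc n a b s \<noteq> (\<lambda>_. 0::'k)" using polyfun_zero by metis
  thus ?thesis using suppok_G[OF assms(1)] by (simp add: Vd_iff)
qed

lemma comp_G: assumes "i \<le> n" "2 \<le> n"
  shows "polyfun n 2 (Gc n a b (-s)) i (hmap n 2 (Gc n a b s) x) = (LL a b x)^3 * (x i :: 'k::real_normed_field)"
proof -
  have h0: "hmap n 2 (Gc n a b s) x 0 = LL a b x * x 0" using assms by (simp add: hmap_def polyfun_G)
  have h1: "hmap n 2 (Gc n a b s) x 1 = LL a b x * x 1" using assms by (simp add: hmap_def polyfun_G)
  have hi: "hmap n 2 (Gc n a b s) x i = LL a b x * x i + (if i = 2 then of_real s * (x 0 * x 0 + x 1 * x 1) else 0)"
    using assms by (simp add: hmap_def polyfun_G)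
  show ?thesis using assms unfolding polyfun_G[OF assms] LL_def[of a b "hmap n 2 (Gc n a b s) x"] h0 h1 hi
    by (simp add: LL_def algebra_simps power3_eq_cube)
qed

lemma compid_G: assumes "2 \<le> n" "a\<^sup>2 + b\<^sup>2 = 1"
  shows "comp_is_id n 2 (Gc n a b (-s) :: 'k::real_normed_field coeffs) 2 (Gc n a b s)"
proof -
  have "a \<noteq> 0 \<or> b \<noteq> 0" using assms(2) by auto
  then obtain i where i: "i \<le> n" "pt a b i \<noteq> (0::'k)"
  proof
    assume "a \<noteq> 0" thus ?thesis using that[of 0] by (simp add: pt_def)
  next
    assume "b \<noteq> 0" thus ?thesis using that[of 1] assms by (simp add: pt_def)
  qed
  show ?thesis unfolding comp_is_id_def
  proof (intro conjI allI impI)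
    show "\<exists>x. \<exists>i\<le>n. polyfun n 2 (Gc n a b (- s)) i (hmap n 2 (Gc n a b s) x) \<noteq> (0::'k)"
      using i assms by (intro exI[of _ "pt a b"] exI[of _ i]) (simp add: comp_G LL_pt)
  next
    fix x :: "nat \<Rightarrow> 'k" and i j assume "i \<le> n" "j \<le> n"
    thus "polyfun n 2 (Gc n a b (- s)) i (hmap n 2 (Gc n a b s) x) * x j =
          polyfun n 2 (Gc n a b (- s)) j (hmap n 2 (Gc n a b s) x) * x i"
      using assms by (simp add: comp_G mult_ac)
  qed
qed

lemma birat_G: assumes "2 \<le> n" "a\<^sup>2 + b\<^sup>2 = 1"
  shows "birational n 2 (Gc n a b s :: 'k::real_normed_field coeffs)"
  unfolding birational_def
proof (intro conjI exI[of _ 2] bexI[of _ "Gc n a b (-s)"])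
  show "comp_is_id n 2 (Gc n a b (- s)) 2 (Gc n a b s :: 'k coeffs)" using compid_G[OF assms] .
  show "comp_is_id n 2 (Gc n a b s) 2 (Gc n a b (- s) :: 'k coeffs)" using compid_G[OF assms, of "-s"] by simp
qed (use G_Vd[OF assms] in auto)

lemma punct: fixes f :: "real \<Rightarrow> 'k::real_normed_field"
  assumes "continuous (at 0) f" "\<And>t. t \<noteq> 0 \<Longrightarrow> f t = 0" shows "f 0 = 0"
proof -
  have "(f \<longlongrightarrow> f 0) (at 0)" using assms(1) by (simp add: continuous_at)
  moreover have "(f \<longlongrightarrow> 0) (at 0)"
    by (rule tendsto_eventually) (auto simp: eventually_at_filter assms(2))
  ultimately show ?thesis by (rule LIM_unique)
qed

lemma cont_poly_line: "continuous (at t0) (\<lambda>t::real. polyfun n d c i (\<lambda>k. x k + of_real t * v k) :: 'k::real_normed_field)"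
  unfolding polyfun_def by (intro continuous_intros)

lemma vanish_ext: fixes c :: "'k::real_normed_field coeffs"
  assumes "\<And>y. y m \<noteq> 0 \<Longrightarrow> polyfun n d c i y = 0" shows "polyfun n d c i x = 0"
proof (cases "x m = 0")
  case False thus ?thesis using assms by blast
next
  case True
  define f where "f t = polyfun n d c i (\<lambda>k. x k + of_real t * (if k = m then 1 else 0))" for t
  have "f 0 = 0"
  proof (rule punct)
    show "continuous (at 0) f" unfolding f_def by (rule cont_poly_line)
    fix t :: real assume "t \<noteq> 0"
    thus "f t = 0" unfolding f_def using True by (intro assms) simp
  qed
  thus ?thesis by (simp add: f_def)
qed

lemma LL_cancel: fixes g :: "'k::real_normed_field coeffs"
  assumes ab: "a\<^sup>2 + b\<^sup>2 = 1"
  and h: "\<And>x. LL a b x * (x i * polyfun n e g j x) = LL a b x * (x j * polyfun n e g i x)"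
  shows "x i * polyfun n e g j x = x j * polyfun n e g i x"
proof -
  define y where "y t = (\<lambda>k. x k + of_real t * pt a b k)" for t :: real
  define f where "f t = polyfun n e g j (y t) * y t i - polyfun n e g i (y t) * y t j" for t
  have Ly: "LL a b (y t) = LL a b x + of_real t" for t
  proof -
    have "LL a b (y t) = LL a b x + of_real t * LL a b (pt a b)"
      by (simp add: y_def LL_def algebra_simps)
    moreover have "LL a b (pt a b) = (1::'k)" by (rule LL_pt[OF ab])
    ultimately show ?thesis by simp
  qed
  have fz: "f t = 0" if "LL a b (y t) \<noteq> 0" for t
    using h[of "y t"] that by (simp add: f_def mult_ac)
  have "f 0 = 0"
  proof (cases "LL a b x = 0")
    case False thus ?thesis using fz[of 0] Ly[of 0] by simp
  next
    case True
    show ?thesis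
    proof (rule punct)
      show "continuous (at 0) f" unfolding f_def y_def
        by (intro continuous_intros cont_poly_line)
      fix t :: real assume "t \<noteq> 0" thus "f t = 0" using fz[of t] Ly[of t] True by simp
    qed
  qed
  thus ?thesis by (simp add: f_def y_def mult_ac)
qed

lemma polyfun_G0: assumes "i \<le> n" "2 \<le> n"
  shows "polyfun n 2 (Gc n a b 0) i x = LL a b x * x i"
  using polyfun_G[OF assms, of a b 0 x] by simp

lemma same_map_G0: assumes "2 \<le> n" "a\<^sup>2 + b\<^sup>2 = 1"
  shows "same_map n 2 (Gc n a b 0) e (g::'k::real_normed_field coeffs) \<longleftrightarrow>
         (\<forall>x. \<forall>i\<le>n. \<forall>j\<le>n. x i * polyfun n e g j x = x j * polyfun n e g i x)"
proof
  assume "same_map n 2 (Gc n a b 0) e g"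
  hence h: "\<And>x i j. i \<le> n \<Longrightarrow> j \<le> n \<Longrightarrow> LL a b x * (x i * polyfun n e g j x) = LL a b x * (x j * polyfun n e g i x)"
    using assms by (simp add: same_map_def polyfun_G0 mult_ac)
  show "\<forall>x. \<forall>i\<le>n. \<forall>j\<le>n. x i * polyfun n e g j x = x j * polyfun n e g i x"
    using LL_cancel[OF assms(2) h] by blast
next
  assume "\<forall>x. \<forall>i\<le>n. \<forall>j\<le>n. x i * polyfun n e g j x = x j * polyfun n e g i x"
  thus "same_map n 2 (Gc n a b 0) e g" using assms
    by (simp add: same_map_def polyfun_G0)
qed

lemma psi_cong: "(\<And>e g. same_map n d h e g \<longleftrightarrow> same_map n d' h' e g) \<Longrightarrow> psi n d h = psi n d' h'"
  by (auto simp: psi_def)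

lemma psi_G0: assumes "2 \<le> n" "a\<^sup>2 + b\<^sup>2 = 1"
  shows "psi n 2 (Gc n a b 0 :: 'k::real_normed_field coeffs) = psi n 2 (Gc n 1 0 0)"
  by (rule psi_cong) (simp add: same_map_G0 assms)

lemma istopology_quotient: "istopology (\<lambda>U. U \<subseteq> f ` topspace X \<and> openin X {x \<in> topspace X. f x \<in> U})"
  unfolding istopology_def
proof (rule conjI; intro allI impI)
  fix S T assume h: "S \<subseteq> f ` topspace X \<and> openin X {x \<in> topspace X. f x \<in> S}"
    "T \<subseteq> f ` topspace X \<and> openin X {x \<in> topspace X. f x \<in> T}"
  have e: "{x \<in> topspace X. f x \<in> S \<inter> T} = {x \<in> topspace X. f x \<in> S} \<inter> {x \<in> topspace X. f x \<in> T}" by blast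
  have o: "openin X ({x \<in> topspace X. f x \<in> S} \<inter> {x \<in> topspace X. f x \<in> T})"
    using h by (metis openin_Int)
  show "S \<inter> T \<subseteq> f ` topspace X \<and> openin X {x \<in> topspace X. f x \<in> S \<inter> T}"
  proof
    show "S \<inter> T \<subseteq> f ` topspace X" using h by blast
    show "openin X {x \<in> topspace X. f x \<in> S \<inter> T}" by (simp only: e o)
  qed
next
  fix K assume h: "\<forall>S\<in>K. S \<subseteq> f ` topspace X \<and> openin X {x \<in> topspace X. f x \<in> S}"
  have e: "{x \<in> topspace X. f x \<in> \<Union>K} = \<Union>((\<lambda>S. {x \<in> topspace X. f x \<in> S}) ` K)" by blast
  have o: "openin X (\<Union>((\<lambda>S. {x \<in> topspace X. f x \<in> S}) ` K))"
  proof (rule openin_Union)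
    fix S' assume "S' \<in> (\<lambda>S. {x \<in> topspace X. f x \<in> S}) ` K"
    then obtain S where "S \<in> K" "S' = {x \<in> topspace X. f x \<in> S}" by blast
    thus "openin X S'" using h by blast
  qed
  show "\<Union>K \<subseteq> f ` topspace X \<and> openin X {x \<in> topspace X. f x \<in> \<Union>K}"
  proof
    show "\<Union>K \<subseteq> f ` topspace X" using h by blast
    show "openin X {x \<in> topspace X. f x \<in> \<Union>K}" by (simp only: e o)
  qed
qed

lemma openin_quotient_top: "openin (quotient_top X f) U \<longleftrightarrow> U \<subseteq> f ` topspace X \<and> openin X {x \<in> topspace X. f x \<in> U}"
  unfolding quotient_top_def using istopology_quotient[of f X] by (simp only: topology_inverse')

lemma topspace_quotient_top: "topspace (quotient_top X f) = f ` topspace X"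
proof -
  have e: "{x \<in> topspace X. f x \<in> f ` topspace X} = topspace X" by blast
  have "openin (quotient_top X f) (f ` topspace X)" unfolding openin_quotient_top e by simp
  hence "f ` topspace X \<subseteq> topspace (quotient_top X f)" by (rule openin_subset)
  moreover have "topspace (quotient_top X f) \<subseteq> f ` topspace X"
    using openin_topspace[of "quotient_top X f"] unfolding openin_quotient_top by blast
  ultimately show ?thesis by blast
qed

lemma topspace_Wtop: "topspace (Wtop n d) = W n d"
  by (simp add: Wtop_def topspace_quotient_top W_def)
lemma H_sub_W: "H n d \<subseteq> W n d" by (auto simp: H_def)
lemma topspace_Htop: "topspace (Htop n d) = H n d"
  using H_sub_W by (auto simp: Htop_def topspace_Wtop)
lemma topspace_Bir_le_top: "topspace (Bir_le_top n d) = Bir_le n d"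
  by (simp add: Bir_le_top_def topspace_quotient_top topspace_Htop Bir_le_def)

lemma istopology_BirTop: "istopology (\<lambda>U. U \<subseteq> Bir n \<and> (\<forall>d\<ge>1. openin (Bir_le_top n d) (U \<inter> Bir_le n d)))"
  unfolding istopology_def
proof (rule conjI; intro allI impI)
  fix S T :: "'k::real_normed_field bir set"
  assume h1: "S \<subseteq> Bir n \<and> (\<forall>d\<ge>1. openin (Bir_le_top n d) (S \<inter> Bir_le n d))"
    and h2: "T \<subseteq> Bir n \<and> (\<forall>d\<ge>1. openin (Bir_le_top n d) (T \<inter> Bir_le n d))"
  show "S \<inter> T \<subseteq> Bir n \<and> (\<forall>d\<ge>1. openin (Bir_le_top n d) (S \<inter> T \<inter> Bir_le n d))"
  proof (intro conjI allI impI)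
    show "S \<inter> T \<subseteq> Bir n" using h1 by blast
    fix d :: nat assume d: "1 \<le> d"
    have e: "S \<inter> T \<inter> Bir_le n d = (S \<inter> Bir_le n d) \<inter> (T \<inter> Bir_le n d)" by blast
    have "openin (Bir_le_top n d) ((S \<inter> Bir_le n d) \<inter> (T \<inter> Bir_le n d))"
      by (rule openin_Int) (use h1 h2 d in blast)+
    thus "openin (Bir_le_top n d) (S \<inter> T \<inter> Bir_le n d)" by (simp only: e)
  qed
next
  fix K :: "'k::real_normed_field bir set set"
  assume h: "\<forall>S\<in>K. S \<subseteq> Bir n \<and> (\<forall>d\<ge>1. openin (Bir_le_top n d) (S \<inter> Bir_le n d))"
  show "\<Union>K \<subseteq> Bir n \<and> (\<forall>d\<ge>1. openin (Bir_le_top n d) (\<Union>K \<inter> Bir_le n d))"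
  proof (intro conjI allI impI)
    show "\<Union>K \<subseteq> Bir n" using h by blast
    fix d :: nat assume "1 \<le> d"
    have eq: "\<Union>K \<inter> Bir_le n d = \<Union>((\<lambda>S. S \<inter> Bir_le n d) ` K)" by blast
    have "openin (Bir_le_top n d) (\<Union>((\<lambda>S. S \<inter> Bir_le n d) ` K))"
    proof (rule openin_Union)
      fix S' assume "S' \<in> (\<lambda>S. S \<inter> Bir_le n d) ` K"
      then obtain S where "S \<in> K" "S' = S \<inter> Bir_le n d" by blast
      thus "openin (Bir_le_top n d) S'" using h \<open>1 \<le> d\<close> by blast
    qed
    thus "openin (Bir_le_top n d) (\<Union>K \<inter> Bir_le n d)" by (simp only: eq)
  qed
qed

lemma openin_BirTop: fixes U :: "'k::real_normed_field bir set"
  shows "openin (BirTop n) U \<longleftrightarrow> U \<subseteq> Bir n \<and> (\<forall>d\<ge>1. openin (Bir_le_top n d) (U \<inter> Bir_le n d))"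
  unfolding BirTop_def by (simp only: topology_inverse'[OF istopology_BirTop[of n]])

lemma topspace_BirTop: "topspace (BirTop n) = Bir n"
proof -
  have "openin (BirTop n) (Bir n)" unfolding openin_BirTop
  proof (intro conjI allI impI subset_refl)
    fix d :: nat assume "1 \<le> d"
    hence "Bir n \<inter> Bir_le n d = topspace (Bir_le_top n d)"
      by (auto simp: Bir_def topspace_Bir_le_top)
    thus "openin (Bir_le_top n d) (Bir n \<inter> Bir_le n d)" by (metis openin_topspace)
  qed
  hence "Bir n \<subseteq> topspace (BirTop n)" by (rule openin_subset)
  moreover have "topspace (BirTop n) \<subseteq> Bir n"
    using openin_topspace[of "BirTop n"] unfolding openin_BirTop by blast
  ultimately show ?thesis by blast
qed

lemma mem_pc: "h \<in> proj_class c \<longleftrightarrow> (\<exists>s. s \<noteq> 0 \<and> h = (\<lambda>p. s * c p))"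
  by (auto simp: proj_class_def)
lemma self_pc: "c \<in> proj_class c"
  unfolding mem_pc by (intro exI[of _ 1]) auto
lemma pc_mem_eq: assumes "h \<in> proj_class c" shows "proj_class h = proj_class c"
proof -
  obtain s where s: "s \<noteq> 0" "h = (\<lambda>p. s * c p)" using assms mem_pc by blast
  show ?thesis
  proof (rule set_eqI)
    fix g
    show "g \<in> proj_class h \<longleftrightarrow> g \<in> proj_class c"
    proof
      assume "g \<in> proj_class h"
      then obtain t where t: "t \<noteq> 0" "g = (\<lambda>p. t * h p)" using mem_pc by blast
      hence "g = (\<lambda>p. (t * s) * c p)" using s by (simp add: mult.assoc)
      moreover have "t * s \<noteq> 0" using t s by simp
      ultimately show "g \<in> proj_class c" using mem_pc by blast
    next
      assume "g \<in> proj_class c"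
      then obtain t where t: "t \<noteq> 0" "g = (\<lambda>p. t * c p)" using mem_pc by blast
      hence "g = (\<lambda>p. (t / s) * h p)" using s by (simp add: fun_eq_iff)
      moreover have "t / s \<noteq> 0" using t s by simp
      ultimately show "g \<in> proj_class h" using mem_pc by blast
    qed
  qed
qed
lemma pc_eq: "proj_class c = proj_class c' \<Longrightarrow> \<exists>s. s \<noteq> 0 \<and> c' = (\<lambda>p. s * c p)"
  using self_pc[of c'] mem_pc by blast

lemma Vd_scale: "c \<in> Vd n d \<Longrightarrow> s \<noteq> 0 \<Longrightarrow> (\<lambda>p. s * c p) \<in> Vd n d"
  by (auto simp: Vd_def fun_eq_iff)

lemma psi_scale: "s \<noteq> 0 \<Longrightarrow> psi n d (\<lambda>p. s * c p) = psi n d c"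
  by (rule psi_cong) (auto simp: same_map_def polyfun_scale mult.assoc)

lemma pi_pc: "pi n d (proj_class c) = psi n d c"
proof -
  have "(SOME h. h \<in> proj_class c) \<in> proj_class c" by (rule someI[of "\<lambda>h. h \<in> proj_class c", OF self_pc])
  then obtain s where "s \<noteq> 0" "(SOME h. h \<in> proj_class c) = (\<lambda>p. s * c p)" using mem_pc by blast
  thus ?thesis by (simp add: pi_def psi_scale)
qed

lemma open_pc:
  assumes "openin (subtopology euclidean (Vd n d)) Op" "\<And>c s. c \<in> Op \<Longrightarrow> s \<noteq> 0 \<Longrightarrow> (\<lambda>p. s * c p) \<in> Op"
  shows "openin (Wtop n d) (proj_class ` Op)"
proof -
  have OV: "Op \<subseteq> Vd n d" using openin_subset[OF assms(1)] by simp
  have "{x \<in> Vd n d. proj_class x \<in> proj_class ` Op} = Op"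
  proof safe
    fix x c assume "x \<in> Vd n d" "c \<in> Op" "proj_class x = proj_class c"
    then obtain s where "s \<noteq> 0" "x = (\<lambda>p. s * c p)" using pc_eq by metis
    thus "x \<in> Op" using assms(2) \<open>c \<in> Op\<close> by simp
  qed (use OV in auto)
  moreover have "topspace (subtopology euclidean (Vd n d)) = Vd n d" by simp
  moreover have "proj_class ` Op \<subseteq> proj_class ` Vd n d" using OV by (rule image_mono)
  ultimately show ?thesis unfolding Wtop_def openin_quotient_top using assms(1) by simp
qed



lemma G_H: assumes "2 \<le> n" "a\<^sup>2 + b\<^sup>2 = 1"
  shows "proj_class (Gc n a b s :: 'k::real_normed_field coeffs) \<in> H n 2"
proof -
  have "proj_class (Gc n a b s :: 'k coeffs) \<in> W n 2" unfolding W_def using G_Vd[OF assms] by (rule imageI)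
  thus ?thesis unfolding H_def using birat_G[OF assms] self_pc by blast
qed

lemma psi_G_Bir: assumes "2 \<le> n" "a\<^sup>2 + b\<^sup>2 = 1"
  shows "psi n 2 (Gc n a b s :: 'k::real_normed_field coeffs) \<in> Bir n"
proof -
  have "pi n 2 (proj_class (Gc n a b s :: 'k coeffs)) \<in> Bir_le n 2"
    unfolding Bir_le_def using G_H[OF assms] by (rule imageI)
  hence "psi n 2 (Gc n a b s :: 'k coeffs) \<in> Bir_le n 2" by (simp only: pi_pc)
  thus ?thesis unfolding Bir_def by auto
qed


lemma cont_Gv: "continuous_on UNIV (\<lambda>v::real\<times>real\<times>real. Gc n (fst v) (fst (snd v)) (snd (snd v)) :: 'k::real_normed_field coeffs)"
  unfolding Gc_def by (intro continuous_on_coordinatewise_then_product continuous_intros)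

lemma cont_polyfun_c: "continuous_on UNIV (\<lambda>c::'k::real_normed_field coeffs. polyfun n d c i y)"
  unfolding polyfun_def
  by (intro continuous_on_sum continuous_on_mult continuous_on_const continuous_on_product_coordinates)



definition gam :: "real \<Rightarrow> real \<times> real \<times> real" where
  "gam t = (if t = 0 then (1, 0, 0) else (cos (1/t), sin (1/t), t))"
definition Gv :: "nat \<Rightarrow> real \<times> real \<times> real \<Rightarrow> ('k::real_normed_field) coeffs" where
  "Gv n v = Gc n (fst v) (fst (snd v)) (snd (snd v))"
definition rho :: "nat \<Rightarrow> real \<Rightarrow> ('k::real_normed_field) bir" where
  "rho n t = psi n 2 (Gv n (gam t))"

lemma gam_circle: "(fst (gam t))\<^sup>2 + (fst (snd (gam t)))\<^sup>2 = 1"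
  by (simp add: gam_def)

lemma key_open:
  fixes U :: "'k::real_normed_field bir set"
  assumes n2: "2 \<le> n" and U: "openin (BirTop n) U"
  obtains T :: "'k coeffs set" where "open T" "\<And>a b s. a\<^sup>2 + b\<^sup>2 = 1 \<Longrightarrow> (psi n 2 (Gc n a b s :: 'k coeffs) \<in> U \<longleftrightarrow> Gc n a b s \<in> T)"
proof -
  have "openin (Bir_le_top n 2) (U \<inter> Bir_le n 2)" using U unfolding openin_BirTop by simp
  hence o1: "openin (Htop n 2) {w \<in> H n 2. pi n 2 w \<in> U \<inter> Bir_le n 2}"
    unfolding Bir_le_top_def openin_quotient_top topspace_Htop by blast
  then obtain V' where V': "openin (Wtop n 2) V'" "{w \<in> H n 2. pi n 2 w \<in> U \<inter> Bir_le n 2} = V' \<inter> H n 2"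
    unfolding Htop_def openin_subtopology by blast
  have "openin (subtopology euclidean (Vd n 2)) {x \<in> Vd n 2. proj_class x \<in> V'}"
    using V'(1) unfolding Wtop_def openin_quotient_top by simp
  then obtain T where T: "open T" "{x \<in> Vd n 2. proj_class x \<in> V'} = T \<inter> Vd n 2"
    unfolding openin_subtopology by auto
  show ?thesis
  proof (rule that[OF T(1)])
    fix a b s :: real assume ab: "a\<^sup>2 + b\<^sup>2 = 1"
    let ?c = "Gc n a b s :: 'k coeffs"
    have cV: "?c \<in> Vd n 2" using G_Vd[OF n2 ab] .
    have cH: "proj_class ?c \<in> H n 2" using G_H[OF n2 ab] .
    have pl: "pi n 2 (proj_class ?c) \<in> Bir_le n 2" unfolding Bir_le_def using cH by (rule imageI)
    have "psi n 2 ?c \<in> U \<longleftrightarrow> proj_class ?c \<in> {w \<in> H n 2. pi n 2 w \<in> U \<inter> Bir_le n 2}"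
      using cH pl by (simp add: pi_pc)
    also have "\<dots> \<longleftrightarrow> proj_class ?c \<in> V'" using V'(2) cH by blast
    also have "\<dots> \<longleftrightarrow> ?c \<in> {x \<in> Vd n 2. proj_class x \<in> V'}" using cV by blast
    also have "\<dots> \<longleftrightarrow> ?c \<in> T" using T(2) cV by blast
    finally show "psi n 2 ?c \<in> U \<longleftrightarrow> ?c \<in> T" .
  qed
qed

lemma rho_cont:
  assumes n2: "2 \<le> n"
  shows "continuous_map (subtopology euclideanreal {-1..1}) (BirTop n) (rho n :: real \<Rightarrow> 'k::real_normed_field bir)"
  unfolding continuous_map_def
proof (intro conjI allI impI)
  show "rho n \<in> topspace (subtopology euclideanreal {- 1..1}) \<rightarrow> topspace (BirTop n :: 'k bir topology)"
  proof (rule Pi_I)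
    fix t show "rho n t \<in> topspace (BirTop n :: 'k bir topology)"
      unfolding topspace_BirTop rho_def Gv_def by (rule psi_G_Bir[OF n2 gam_circle])
  qed
next
  fix U :: "'k bir set" assume U: "openin (BirTop n) U"
  obtain T :: "'k coeffs set" where T: "open T" "\<And>a b s. a\<^sup>2 + b\<^sup>2 = 1 \<Longrightarrow> (psi n 2 (Gc n a b s :: 'k coeffs) \<in> U \<longleftrightarrow> Gc n a b s \<in> T)"
    using key_open[OF n2 U] by blast
  define S where "S = (Gv n :: _ \<Rightarrow> 'k coeffs) -` T"
  have oS: "open S"
  proof -
    have "continuous_on UNIV (Gv n :: _ \<Rightarrow> 'k coeffs)" unfolding Gv_def[abs_def] by (rule cont_Gv)
    thus ?thesis unfolding S_def using T(1) by (intro open_vimage)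
  qed
  have iff: "rho n t \<in> U \<longleftrightarrow> gam t \<in> S" for t
    unfolding rho_def S_def Gv_def using T(2)[OF gam_circle[of t]] by simp
  have circ: "(cos th, sin th, 0) \<in> S" if "(1, 0, 0) \<in> S" for th
  proof -
    have "psi n 2 (Gc n 1 0 0 :: 'k coeffs) \<in> U" using that T(2)[of 1 0 0] by (simp add: S_def Gv_def)
    moreover have "psi n 2 (Gc n (cos th) (sin th) 0 :: 'k coeffs) = psi n 2 (Gc n 1 0 0)"
      by (rule psi_G0[OF n2]) simp
    ultimately have "psi n 2 (Gc n (cos th) (sin th) 0 :: 'k coeffs) \<in> U" by simp
    thus ?thesis using T(2)[of "cos th" "sin th" 0] by (simp add: S_def Gv_def)
  qed
  define B where "B = {t. gam t \<in> S}"
  have oB: "open B" unfolding open_contains_ball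
  proof
    fix t assume tB: "t \<in> B"
    show "\<exists>e>0. ball t e \<subseteq> B"
    proof (cases "t = 0")
      case False
      define O1 where "O1 = (\<lambda>t. (cos (1/t), sin (1/t), t)) -` S \<inter> (- {0})"
      have "continuous_on (- {0}) (\<lambda>t::real. (cos (1/t), sin (1/t), t))"
        by (intro continuous_intros) auto
      hence "open O1" unfolding O1_def using oS continuous_on_open_vimage[of "- {0::real}"] open_Compl[OF closed_singleton] by blast
      moreover have "t \<in> O1" using tB False by (simp add: O1_def B_def gam_def)
      ultimately obtain e where "e > 0" "ball t e \<subseteq> O1" using open_contains_ball by blast
      moreover have "O1 \<subseteq> B" by (auto simp: O1_def B_def gam_def)
      ultimately show ?thesis by blast
    next
      case True
      hence one: "(1, 0, 0) \<in> S" using tB by (simp add: B_def gam_def)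
      define C where "C = (\<lambda>th. (cos th, sin th, 0::real)) ` {0..2*Transcendental.pi}"
      have "compact C" unfolding C_def by (intro compact_continuous_image continuous_intros) auto
      moreover have "C \<subseteq> \<Union>{S}" using circ[OF one] by (auto simp: C_def)
      ultimately obtain e where e: "e > 0" "\<And>x. x \<in> C \<Longrightarrow> \<exists>G\<in>{S}. ball x e \<subseteq> G"
        using Heine_Borel_lemma[of C "{S}"] oS by blast
      have "ball 0 e \<subseteq> B"
      proof
        fix u :: real assume u: "u \<in> ball 0 e"
        show "u \<in> B"
        proof (cases "u = 0")
          case True thus ?thesis using one by (simp add: B_def gam_def)
        next
          case False
          obtain th where th: "0 \<le> th" "th < 2*Transcendental.pi" "cos (1/u) = cos th" "sin (1/u) = sin th"
            using sincos_total_2pi[of "cos (1/u)" "sin (1/u)"] by auto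
          have xC: "(cos th, sin th, 0) \<in> C" using th by (auto simp: C_def)
          have "dist (cos th, sin th, 0) (gam u) = \<bar>u\<bar>"
            using False th by (simp add: gam_def dist_Pair_Pair dist_real_def)
          hence "gam u \<in> ball (cos th, sin th, 0) e" using u by (simp add: dist_real_def)
          thus ?thesis using e(2)[OF xC] by (auto simp: B_def)
        qed
      qed
      thus ?thesis using e(1) True by blast
    qed
  qed
  have "{x \<in> topspace (subtopology euclideanreal {- 1..1}). rho n x \<in> U} = B \<inter> {-1..1}"
    using iff by (auto simp: B_def)
  thus "openin (subtopology euclideanreal {- 1..1}) {x \<in> topspace (subtopology euclideanreal {- 1..1}). rho n x \<in> U}"
    unfolding openin_subtopology using oB by auto
qed



lemma polyfun_at0: assumes "1 \<le> e" shows "polyfun n e g i (\<lambda>_. 0::'k::real_normed_field) = 0"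
proof -
  have P: "(\<Prod>j\<le>n. (0::'k) ^ a j) = 0" if a: "a \<in> Mon n e" for a
  proof -
    have "\<exists>j\<le>n. a j \<noteq> 0"
    proof (rule ccontr)
      assume "\<not> (\<exists>j\<le>n. a j \<noteq> 0)"
      hence "(\<Sum>j\<le>n. a j) = 0" by simp
      thus False using a assms by (simp add: Mon_def)
    qed
    then obtain j where "j \<le> n" "a j \<noteq> 0" by blast
    thus ?thesis by (intro prod_zero) auto
  qed
  show ?thesis unfolding polyfun_def by (rule sum.neutral) (simp add: P)
qed

lemma in_psi_self: "birational n d h \<Longrightarrow> 1 \<le> d \<Longrightarrow> (d, h) \<in> psi n d h"
  by (simp add: psi_def same_map_def mult.commute)

lemma holo_line: "(\<lambda>z. polyfun n d c i (\<lambda>j. y j + z * v j)) holomorphic_on UNIV"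
  unfolding polyfun_def by (intro holomorphic_intros)

lemma zero_islimpt_Reals: "(0::complex) islimpt \<real>"
  unfolding islimpt_approachable
proof (intro allI impI)
  fix e :: real assume "0 < e"
  have a: "complex_of_real (e/2) \<in> \<real>" by (rule Reals_of_real)
  have b: "complex_of_real (e/2) \<noteq> 0" using \<open>0 < e\<close> by simp
  have c: "dist (complex_of_real (e/2)) 0 < e" using \<open>0 < e\<close> by (simp add: dist_norm)
  show "\<exists>x'::complex\<in>\<real>. x' \<noteq> 0 \<and> dist x' 0 < e"
  proof (rule bexI)
    show "complex_of_real (e/2) \<noteq> 0 \<and> dist (complex_of_real (e/2)) 0 < e" using b c by (rule conjI)
    show "complex_of_real (e/2) \<in> \<real>" by (rule a)
  qed
qed

lemma ana_complex:
  fixes x :: "nat \<Rightarrow> complex"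
  assumes "x 1 \<noteq> 0" "\<And>r::real. polyfun n d c i (x(0 := of_real r * x 1)) = 0"
  shows "polyfun n d c i x = 0"
proof -
  define y :: "nat \<Rightarrow> complex" where "y = x(0 := 0)"
  define v :: "nat \<Rightarrow> complex" where "v = (\<lambda>j. if j = 0 then x 1 else (0::complex))"
  define f where "f z = polyfun n d c i (\<lambda>j. y j + z * v j)" for z
  have fe: "f z = polyfun n d c i (x(0 := z * x 1))" for z
    unfolding f_def y_def v_def by (rule arg_cong[where f = "polyfun n d c i"]) auto
  have "f (x 0 / x 1) = 0"
  proof (rule analytic_continuation[of f UNIV \<real> 0])
    show "f holomorphic_on UNIV" unfolding f_def by (rule holo_line)
    show "(0::complex) islimpt \<real>" by (rule zero_islimpt_Reals)
    fix z :: complex assume "z \<in> \<real>"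
    then obtain r where "z = of_real r" by (auto elim: Reals_cases)
    thus "f z = 0" using assms(2)[of r] by (simp add: fe)
  qed auto
  moreover have "x(0 := x 0 / x 1 * x 1) = x" using assms(1) by auto
  ultimately show ?thesis by (simp add: fe)
qed

lemma ana_real:
  fixes x :: "nat \<Rightarrow> real"
  assumes "x 1 \<noteq> 0" "\<And>r::real. polyfun n d c i (x(0 := of_real r * x 1)) = 0"
  shows "polyfun n d c i x = 0"
proof -
  have "x(0 := of_real (x 0 / x 1) * x 1) = x" using assms(1) by auto
  thus ?thesis using assms(2)[of "x 0 / x 1"] by simp
qed



lemma no_lift:
  fixes \<rho>e :: "real \<Rightarrow> ('k::real_normed_field) coeffs set"
  assumes n2: "2 \<le> n" and d1: "1 \<le> d" and ep: "0 < \<epsilon>"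
  and ANA: "\<And>(c::'k coeffs) x. x 1 \<noteq> 0 \<Longrightarrow> (\<And>r::real. polyfun n d c 0 (x(0 := of_real r * x 1)) = 0) \<Longrightarrow> polyfun n d c 0 x = 0"
  and cont: "continuous_map (subtopology euclideanreal {-\<epsilon><..<\<epsilon>}) (Htop n d) \<rho>e"
  and lift: "\<And>t. t \<in> {-\<epsilon><..<\<epsilon>} \<Longrightarrow> pi n d (\<rho>e t) = rho n t"
  shows False
proof -
  have tsp: "topspace (subtopology euclideanreal {-\<epsilon><..<\<epsilon>}) = {-\<epsilon><..<\<epsilon>}" by simp
  have mapsH: "\<rho>e t \<in> H n d" if "t \<in> {-\<epsilon><..<\<epsilon>}" for t
    using cont that unfolding continuous_map_def tsp topspace_Htop by blast
  have opens: "openin (subtopology euclideanreal {-\<epsilon><..<\<epsilon>}) {t \<in> {-\<epsilon><..<\<epsilon>}. \<rho>e t \<in> V}"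
    if "openin (Htop n d) V" for V
    using cont that unfolding continuous_map_def tsp by blast
  have z: "(0::real) \<in> {-\<epsilon><..<\<epsilon>}" using ep by simp
  define w0 where "w0 = \<rho>e 0"
  have w0H: "w0 \<in> H n d" using mapsH[OF z] by (simp add: w0_def)
  then obtain hb where hb: "hb \<in> w0" "birational n d hb" unfolding H_def by blast
  from w0H obtain c0 where c0: "c0 \<in> Vd n d" "w0 = proj_class c0" unfolding H_def W_def by blast
  define h0 where "h0 = (SOME h. h \<in> w0)"
  have h0w: "h0 \<in> w0" unfolding h0_def c0(2) by (rule someI[of "\<lambda>h. h \<in> proj_class c0", OF self_pc])
  then obtain s0 where s0: "s0 \<noteq> 0" "h0 = (\<lambda>p. s0 * c0 p)" using c0(2) mem_pc by blast
  have h0V: "h0 \<in> Vd n d" using Vd_scale[OF c0(1) s0(1)] s0(2) by simp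
  have w0h0: "w0 = proj_class h0" using pc_mem_eq[OF h0w[unfolded c0(2)]] c0(2) by simp
  have "psi n d h0 = rho n 0" using lift[OF z] by (simp add: pi_def h0_def w0_def)
  hence psih0: "psi n d h0 = psi n 2 (Gc n 1 0 0)" by (simp add: rho_def Gv_def gam_def)
  have "(2, Gc n 1 0 0 :: 'k coeffs) \<in> psi n 2 (Gc n 1 0 0 :: 'k coeffs)"
    by (rule in_psi_self) (use birat_G[OF n2, of 1 0 0] in simp_all)
  hence "(2, Gc n 1 0 0 :: 'k coeffs) \<in> psi n d h0" by (simp only: psih0)
  hence sm0: "same_map n d h0 2 (Gc n 1 0 0)" by (simp add: psi_def)

  have claimA: "polyfun n d h0 0 (x(0 := of_real r * x 1)) = 0" if x1: "x 1 \<noteq> 0" for x r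
  proof (rule ccontr)
    define y where "y = x(0 := of_real r * x 1)"
    assume "polyfun n d h0 0 (x(0 := of_real r * x 1)) \<noteq> 0"
    hence nz: "polyfun n d h0 0 y \<noteq> 0" by (simp add: y_def)
    define Op where "Op = {c \<in> Vd n d. polyfun n d c 0 y \<noteq> 0}"
    have "open {c::'k coeffs. polyfun n d c 0 y \<noteq> 0}"
      by (rule open_Collect_neq[OF cont_polyfun_c continuous_on_const])
    moreover have "Op = {c::'k coeffs. polyfun n d c 0 y \<noteq> 0} \<inter> Vd n d" by (auto simp: Op_def)
    ultimately have oO: "openin (subtopology euclidean (Vd n d)) Op"
      unfolding openin_subtopology by auto
    have sat: "(\<lambda>p. s * c p) \<in> Op" if "c \<in> Op" "s \<noteq> 0" for c s
      using that Vd_scale by (auto simp: Op_def polyfun_scale)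
    have oW: "openin (Wtop n d) (proj_class ` Op)" by (rule open_pc[OF oO sat])
    have oH: "openin (Htop n d) (proj_class ` Op \<inter> H n d)"
      unfolding Htop_def openin_subtopology using oW by blast
    define P where "P = {t \<in> {-\<epsilon><..<\<epsilon>}. \<rho>e t \<in> proj_class ` Op \<inter> H n d}"
    have oP: "openin (subtopology euclideanreal {-\<epsilon><..<\<epsilon>}) P" unfolding P_def by (rule opens[OF oH])
    have "h0 \<in> Op" using h0V nz by (simp add: Op_def)
    hence "0 \<in> P" using z w0H w0h0 by (auto simp: P_def w0_def)
    from oP obtain B where B: "open B" "P = B \<inter> {-\<epsilon><..<\<epsilon>}" unfolding openin_subtopology by auto
    have "0 \<in> B" using \<open>0 \<in> P\<close> B(2) by blast
    then obtain \<delta> where dl: "\<delta> > 0" "ball 0 \<delta> \<subseteq> B" using B(1) open_contains_ball by blast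
    define m where "m = min \<delta> \<epsilon>"
    have m: "m > 0" "m \<le> \<delta>" "m \<le> \<epsilon>" using dl ep by (auto simp: m_def)
    define th where "th = arctan (- r)"
    have th0: "cos th * r + sin th = 0" by (simp add: th_def sin_arctan cos_arctan divide_simps)
    have thb: "- (Transcendental.pi/2) < th" using arctan_bounded by (simp add: th_def)
    obtain k :: nat where k: "(1/m + 2) / (2 * Transcendental.pi) < of_nat k" using reals_Archimedean2 by blast
    have "1/m + 2 < 2 * Transcendental.pi * of_nat k" using k pi_gt_zero by (simp add: field_simps)
    hence big: "1/m < th + 2 * Transcendental.pi * of_nat k" using thb pi_less_4 by linarith
    have pos: "0 < th + 2 * Transcendental.pi * of_nat k" using big m(1)
      by (smt (verit) divide_pos_pos)
    define t where "t = 1 / (th + 2 * Transcendental.pi * of_nat k)"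
    have t0: "0 < t" using pos by (simp add: t_def)
    have tm: "t < m" using big pos m(1) unfolding t_def by (simp add: field_simps)
    have it: "1 / t = th + 2 * Transcendental.pi * of_nat k" by (simp add: t_def)
    have cs: "sin (1/t) = sin th \<and> cos (1/t) = cos th"
      unfolding sin_cos_eq_iff it by (intro exI[of _ "int k"]) simp
    have tP: "t \<in> P" using t0 tm m dl(2) B(2) by (auto simp: dist_real_def)
    then obtain c where c: "c \<in> Op" "\<rho>e t = proj_class c" unfolding P_def by blast
    define ht where "ht = (SOME h. h \<in> \<rho>e t)"
    have "ht \<in> proj_class c" unfolding ht_def c(2) by (rule someI[of "\<lambda>h. h \<in> proj_class c", OF self_pc])
    then obtain s where s: "s \<noteq> 0" "ht = (\<lambda>p. s * c p)" using mem_pc by blast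
    have htnz: "polyfun n d ht 0 y \<noteq> 0" using s c(1) by (simp add: polyfun_scale Op_def)
    let ?G = "Gc n (cos (1/t)) (sin (1/t)) t :: 'k coeffs"
    have tI: "t \<in> {-\<epsilon><..<\<epsilon>}" using t0 tm m by auto
    have "psi n d ht = rho n t" using lift[OF tI] by (simp add: pi_def ht_def)
    hence psiht: "psi n d ht = psi n 2 ?G" using t0 by (simp add: rho_def Gv_def gam_def)
    have "birational n 2 ?G" by (rule birat_G[OF n2]) simp
    hence "(2, ?G) \<in> psi n 2 ?G" by (rule in_psi_self) simp
    hence "(2, ?G) \<in> psi n d ht" by (simp only: psiht)
    hence smt: "same_map n d ht 2 ?G" by (simp add: psi_def)
    have "polyfun n d ht 0 y * polyfun n 2 ?G 2 y = polyfun n d ht 2 y * polyfun n 2 ?G 0 y"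
      using smt n2 unfolding same_map_def by auto
    moreover have "LL (cos (1/t)) (sin (1/t)) y = 0"
    proof -
      have "LL (cos (1/t)) (sin (1/t)) y = of_real (cos th * r + sin th) * (x 1 :: 'k)"
        using cs by (simp add: LL_def y_def algebra_simps)
      thus ?thesis using th0 by simp
    qed
    moreover have "polyfun n 2 ?G 0 y = LL (cos (1/t)) (sin (1/t)) y * y 0"
      using n2 polyfun_G[of 0 n "cos (1/t)" "sin (1/t)" t y] by simp
    moreover have "polyfun n 2 ?G 2 y = LL (cos (1/t)) (sin (1/t)) y * y 2 + of_real t * (y 0 * y 0 + y 1 * y 1)"
      using n2 polyfun_G[of 2 n "cos (1/t)" "sin (1/t)" t y] by simp
    moreover have "y 0 * y 0 + y 1 * y 1 = of_real (r\<^sup>2 + 1) * (x 1 * x 1)"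
      by (simp add: y_def algebra_simps power2_eq_square)
    moreover have "(of_real (r\<^sup>2 + 1) :: 'k) \<noteq> 0"
    proof -
      have "r\<^sup>2 + 1 \<noteq> 0" by (smt (verit) zero_le_power2)
      thus ?thesis by (simp only: of_real_eq_0_iff not_False_eq_True)
    qed
    ultimately have "polyfun n d ht 0 y * (of_real t * (of_real (r\<^sup>2 + 1) * (x 1 * x 1))) = 0" by simp
    thus False using htnz t0 x1 \<open>(of_real (r\<^sup>2 + 1) :: 'k) \<noteq> 0\<close> by simp
  qed
  have claimB: "polyfun n d h0 0 x = 0" for x
    by (rule vanish_ext[of 1]) (rule ANA, assumption, rule claimA)
  have claimC: "polyfun n d h0 j x = 0" if j: "j \<le> n" for j x
  proof (rule vanish_ext[of 0])
    fix y :: "nat \<Rightarrow> 'k" assume y0: "y 0 \<noteq> 0"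
    have "polyfun n d h0 0 y * polyfun n 2 (Gc n 1 0 0) j y = polyfun n d h0 j y * polyfun n 2 (Gc n 1 0 0) 0 y"
      using sm0 j unfolding same_map_def by auto
    hence "polyfun n d h0 j y * (y 0 * y 0) = 0" using n2 j claimB[of y] by (simp add: polyfun_G0 LL_def)
    thus "polyfun n d h0 j y = 0" using y0 by simp
  qed
  have "hb \<in> proj_class h0" using hb(1) w0h0 by simp
  then obtain sb where sb: "sb \<noteq> 0" "hb = (\<lambda>p. sb * h0 p)" using mem_pc by blast
  have hm: "hmap n d hb x = (\<lambda>_. 0)" for x
    by (rule ext) (simp add: hmap_def sb(2) polyfun_scale claimC)
  from hb(2) obtain e g where e: "1 \<le> e" "comp_is_id n e g d hb" unfolding birational_def by blast
  then obtain x i where "i \<le> n" "polyfun n e g i (hmap n d hb x) \<noteq> 0" unfolding comp_is_id_def by blast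
  thus False using hm polyfun_at0[OF e(1), of n g i] by simp
qed


theorem proposition1p4:
  fixes n :: nat
  assumes "n \<ge> 2"
  shows "(\<exists>\<rho> :: real \<Rightarrow> real bir.
            continuous_map (subtopology euclideanreal {-1..1}) (BirTop n) \<rho> \<and>
            (\<forall>\<epsilon>>0. \<epsilon> \<le> 1 \<longrightarrow> (\<forall>d\<ge>1. \<not> (\<exists>\<rho>\<epsilon> :: real \<Rightarrow> real coeffs set.
               continuous_map (subtopology euclideanreal {-\<epsilon><..<\<epsilon>}) (Htop n d) \<rho>\<epsilon> \<and>
               (\<forall>t\<in>{-\<epsilon><..<\<epsilon>}. pi n d (\<rho>\<epsilon> t) = \<rho> t)))))
       \<and> (\<exists>\<rho> :: real \<Rightarrow> complex bir.
            continuous_map (subtopology euclideanreal {-1..1}) (BirTop n) \<rho> \<and>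
            (\<forall>\<epsilon>>0. \<epsilon> \<le> 1 \<longrightarrow> (\<forall>d\<ge>1. \<not> (\<exists>\<rho>\<epsilon> :: real \<Rightarrow> complex coeffs set.
               continuous_map (subtopology euclideanreal {-\<epsilon><..<\<epsilon>}) (Htop n d) \<rho>\<epsilon> \<and>
               (\<forall>t\<in>{-\<epsilon><..<\<epsilon>}. pi n d (\<rho>\<epsilon> t) = \<rho> t)))))"
  proof -
  show ?thesis
  proof (rule conjI)
    show "\<exists>\<rho> :: real \<Rightarrow> real bir.
            continuous_map (subtopology euclideanreal {-1..1}) (BirTop n) \<rho> \<and>
            (\<forall>\<epsilon>>0. \<epsilon> \<le> 1 \<longrightarrow> (\<forall>d\<ge>1. \<not> (\<exists>\<rho>\<epsilon> :: real \<Rightarrow> real coeffs set.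
               continuous_map (subtopology euclideanreal {-\<epsilon><..<\<epsilon>}) (Htop n d) \<rho>\<epsilon> \<and>
               (\<forall>t\<in>{-\<epsilon><..<\<epsilon>}. pi n d (\<rho>\<epsilon> t) = \<rho> t))))"
    proof (intro exI[of _ "rho n"] conjI allI impI notI)
      show "continuous_map (subtopology euclideanreal {-1..1}) (BirTop n) (rho n :: real \<Rightarrow> real bir)"
        by (rule rho_cont[OF assms])
      fix \<epsilon> :: real and d :: nat
      assume h: "0 < \<epsilon>" "\<epsilon> \<le> 1" "1 \<le> d" "\<exists>\<rho>\<epsilon> :: real \<Rightarrow> real coeffs set.
               continuous_map (subtopology euclideanreal {-\<epsilon><..<\<epsilon>}) (Htop n d) \<rho>\<epsilon> \<and>
               (\<forall>t\<in>{-\<epsilon><..<\<epsilon>}. pi n d (\<rho>\<epsilon> t) = rho n t)"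
      then obtain \<rho>e :: "real \<Rightarrow> real coeffs set" where
        r: "continuous_map (subtopology euclideanreal {-\<epsilon><..<\<epsilon>}) (Htop n d) \<rho>e"
           "\<forall>t\<in>{-\<epsilon><..<\<epsilon>}. pi n d (\<rho>e t) = rho n t" by blast
      show False
        by (rule no_lift[OF assms h(3) h(1) _ r(1)]) (use r(2) ana_real in auto)
    qed
  next
    show "\<exists>\<rho> :: real \<Rightarrow> complex bir.
            continuous_map (subtopology euclideanreal {-1..1}) (BirTop n) \<rho> \<and>
            (\<forall>\<epsilon>>0. \<epsilon> \<le> 1 \<longrightarrow> (\<forall>d\<ge>1. \<not> (\<exists>\<rho>\<epsilon> :: real \<Rightarrow> complex coeffs set.
               continuous_map (subtopology euclideanreal {-\<epsilon><..<\<epsilon>}) (Htop n d) \<rho>\<epsilon> \<and>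
               (\<forall>t\<in>{-\<epsilon><..<\<epsilon>}. pi n d (\<rho>\<epsilon> t) = \<rho> t))))"
    proof (intro exI[of _ "rho n"] conjI allI impI notI)
      show "continuous_map (subtopology euclideanreal {-1..1}) (BirTop n) (rho n :: real \<Rightarrow> complex bir)"
        by (rule rho_cont[OF assms])
      fix \<epsilon> :: real and d :: nat
      assume h: "0 < \<epsilon>" "\<epsilon> \<le> 1" "1 \<le> d" "\<exists>\<rho>\<epsilon> :: real \<Rightarrow> complex coeffs set.
               continuous_map (subtopology euclideanreal {-\<epsilon><..<\<epsilon>}) (Htop n d) \<rho>\<epsilon> \<and>
               (\<forall>t\<in>{-\<epsilon><..<\<epsilon>}. pi n d (\<rho>\<epsilon> t) = rho n t)"
      then obtain \<rho>e :: "real \<Rightarrow> complex coeffs set" where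
        r: "continuous_map (subtopology euclideanreal {-\<epsilon><..<\<epsilon>}) (Htop n d) \<rho>e"
           "\<forall>t\<in>{-\<epsilon><..<\<epsilon>}. pi n d (\<rho>e t) = rho n t" by blast
      show False
        by (rule no_lift[OF assms h(3) h(1) _ r(1)]) (use r(2) ana_complex in auto)
    qed
  qed
qed

end
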